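(* Let $p>1$, let $[X,\mathcal B,m^i,\nu_i]$ ($i=1,2$) be reversible random walk spaces on the same measurable space with $\nu_2\ll\nu_1$, $\mu=\frac{d\nu_2}{d\nu_1}\in L^\infty(X,\nu_1)$, $\mu\ge c>0$ $\nu_1$-a.e., and assume $\nu_1(X)<\infty$. Let $u_0\in L^2(X,\nu_1)$ and let $u$ be the strong solution of $u_t-\Delta_1^{m^1}u-\mu\Delta_p^{m^2}u\ni0$, $u(0)=u_0$. Then $$\int_X u(t)\,d\nu_1=\int_X u_0\,d\nu_1\quad\text{for all }t\ge0.$$
   Context: Random walk space $[X,\mathcal B,m,\nu]$: measurable space with countably generated $\sigma$-algebra, probability measures $m_x$ depending measurably on $x$, $\sigma$-finite invariant measure $\nu$ ($\nu(A)=\int m_x(A)\,d\nu(x)$), reversible if $dm_x(y)d\nu(x)=dm_y(x)d\nu(y)$. $\nabla u(x,y)=u(y)-u(x)$. $H=L^2(X,\nu_1)$. $(u,v)\in\Delta_1^{m}$ iff $(u,-v)\in\partial_{L^2(X,\nu)}\mathcal F_{1,m}(u)$ with $\mathcal F_{1,m}(u)=\frac12\int_{X\times X}|\nabla u|\,dm_x(y)d\nu(x)$ ($+\infty$ if infinite), $\partial$ the convex subdifferential. For $p>1$, $(u,w)\in\Delta_p^{m}$ iff $u,w\in L^2(X,\nu)$, $\nabla u\in L^p(dm_x(y)d\nu(x))$ and $w(x)=\int_X|\nabla u(x,y)|^{p-2}\nabla u(x,y)\,dm_x(y)$. The operator $A=-\Delta_1^{m^1}-\mu\Delta_p^{m^2}$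 on $H$: $(u,v)\in A$ iff $u,v\in H$, $v=v_1-\mu w$ with $(u,-v_1)\in\Delta_1^{m^1}$ (w.r.t. $\nu_1$) and $(u,w)\in\Delta_p^{m^2}$ (w.r.t. $\nu_2$). A strong solution of $u_t+Au\ni 0$, $u(0)=u_0$, on $[0,\infty)$ is $u\in C([0,\infty);H)\cap W^{1,2}_{\rm loc}(0,\infty;H)$ with $u(0)=u_0$ and $-u_t(t)\in A(u(t))$ for a.e. $t$; it exists and is unique. *)

theory Defs
  imports "HOL-Probability.Probability"
begin

definition random_walk :: "'a measure \<Rightarrow> ('a \<Rightarrow> 'a measure) \<Rightarrow> bool" where
  "random_walk M m \<longleftrightarrow>
     (\<forall>x\<in>space M. prob_space (m x) \<and> sets (m x) = sets M) \<and>
     (\<forall>A\<in>sets M. (\<lambda>x. emeasure (m x) A) \<in> borel_measurable M)"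

definition countably_generated :: "'a measure \<Rightarrow> bool" where
  "countably_generated M \<longleftrightarrow> (\<exists>G. countable G \<and> G \<subseteq> Pow (space M) \<and> sets M = sigma_sets (space M) G)"

definition random_walk_space :: "'a measure \<Rightarrow> ('a \<Rightarrow> 'a measure) \<Rightarrow> 'a measure \<Rightarrow> bool" where
  "random_walk_space M m \<nu> \<longleftrightarrow>
     countably_generated M \<and> random_walk M m \<and>
     sets \<nu> = sets M \<and> sigma_finite_measure \<nu> \<and>
     (\<forall>A\<in>sets M. emeasure \<nu> A = (\<integral>\<^sup>+x. emeasure (m x) A \<partial>\<nu>))"

text \<open>Reversibility: the measure dm_x(y) d nu(x) on X x X is invariant under (x,y) -> (y,x),
  expressed through integrals of nonnegative measurable functions.\<close>
definition reversible :: "'a measure \<Rightarrow> ('a \<Rightarrow> 'a measure) \<Rightarrow> 'a measure \<Rightarrow> bool" where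
  "reversible M m \<nu> \<longleftrightarrow>
     (\<forall>f \<in> borel_measurable (M \<Otimes>\<^sub>M M).
        (\<integral>\<^sup>+x. (\<integral>\<^sup>+y. f (x, y) \<partial>m x) \<partial>\<nu>) = (\<integral>\<^sup>+x. (\<integral>\<^sup>+y. f (y, x) \<partial>m x) \<partial>\<nu>))"

definition reversible_random_walk_space :: "'a measure \<Rightarrow> ('a \<Rightarrow> 'a measure) \<Rightarrow> 'a measure \<Rightarrow> bool" where
  "reversible_random_walk_space M m \<nu> \<longleftrightarrow> random_walk_space M m \<nu> \<and> reversible M m \<nu>"

definition nl_grad :: "('a \<Rightarrow> real) \<Rightarrow> 'a \<Rightarrow> 'a \<Rightarrow> real" where
  "nl_grad u x y = u y - u x"

definition L2 :: "'a measure \<Rightarrow> ('a \<Rightarrow> real) \<Rightarrow> bool" where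
  "L2 \<nu> f \<longleftrightarrow> f \<in> borel_measurable \<nu> \<and> integrable \<nu> (\<lambda>x. (f x)\<^sup>2)"

definition F1 :: "('a \<Rightarrow> 'a measure) \<Rightarrow> 'a measure \<Rightarrow> ('a \<Rightarrow> real) \<Rightarrow> ennreal" where
  "F1 m \<nu> u = ennreal (1/2) * (\<integral>\<^sup>+x. (\<integral>\<^sup>+y. ennreal \<bar>nl_grad u x y\<bar> \<partial>m x) \<partial>\<nu>)"

definition subdiff_L2 :: "'a measure \<Rightarrow> (('a \<Rightarrow> real) \<Rightarrow> ennreal) \<Rightarrow> ('a \<Rightarrow> real) \<Rightarrow> ('a \<Rightarrow> real) \<Rightarrow> bool" where
  "subdiff_L2 \<nu> F u v \<longleftrightarrow> L2 \<nu> u \<and> L2 \<nu> v \<and> F u < \<infinity> \<and>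
     (\<forall>w. L2 \<nu> w \<longrightarrow>
        enn2ereal (F w) \<ge> enn2ereal (F u) + ereal (\<integral>x. v x * (w x - u x) \<partial>\<nu>))"

definition Delta1 :: "('a \<Rightarrow> 'a measure) \<Rightarrow> 'a measure \<Rightarrow> ('a \<Rightarrow> real) \<Rightarrow> ('a \<Rightarrow> real) \<Rightarrow> bool" where
  "Delta1 m \<nu> u v \<longleftrightarrow> subdiff_L2 \<nu> (F1 m \<nu>) u (\<lambda>x. - v x)"

definition Deltap :: "real \<Rightarrow> ('a \<Rightarrow> 'a measure) \<Rightarrow> 'a measure \<Rightarrow> ('a \<Rightarrow> real) \<Rightarrow> ('a \<Rightarrow> real) \<Rightarrow> bool" where
  "Deltap p m \<nu> u w \<longleftrightarrow> L2 \<nu> u \<and> L2 \<nu> w \<and>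
     (\<integral>\<^sup>+x. (\<integral>\<^sup>+y. ennreal (\<bar>nl_grad u x y\<bar> powr p) \<partial>m x) \<partial>\<nu>) < \<infinity> \<and>
     (AE x in \<nu>. w x = (\<integral>y. \<bar>nl_grad u x y\<bar> powr (p - 2) * nl_grad u x y \<partial>m x))"

text \<open>The operator A = -Delta_1^{m1} - mu Delta_p^{m2} on H = L^2(X,nu1):
  (u,v) \<in> A iff v = v1 - mu w with (u,-v1) \<in> Delta_1^{m1} (w.r.t. nu1), (u,w) \<in> Delta_p^{m2} (w.r.t. nu2).\<close>
definition opA :: "real \<Rightarrow> ('a \<Rightarrow> 'a measure) \<Rightarrow> 'a measure \<Rightarrow> ('a \<Rightarrow> 'a measure) \<Rightarrow> 'a measure \<Rightarrow>
    ('a \<Rightarrow> real) \<Rightarrow> ('a \<Rightarrow> real) \<Rightarrow> ('a \<Rightarrow> real) \<Rightarrow> bool" where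
  "opA p m1 \<nu>1 m2 \<nu>2 \<mu> u v \<longleftrightarrow> L2 \<nu>1 u \<and> L2 \<nu>1 v \<and>
     (\<exists>v1 w. Delta1 m1 \<nu>1 u (\<lambda>x. - v1 x) \<and> Deltap p m2 \<nu>2 u w \<and>
        (AE x in \<nu>1. v x = v1 x - \<mu> x * w x))"

text \<open>Strong solution of u_t + A u \<ni> 0, u(0) = u0 on [0,\<infinity>), with values in H = L^2(X,nu1):
  u \<in> C([0,\<infinity>);H), u \<in> W^{1,2}_loc(0,\<infinity>;H) with weak derivative g (u(t) - u(s) = int_s^t g,
  g \<in> L^2(a,b;H) for 0 < a < b), u(0) = u0 and -u_t(t) \<in> A(u(t)) for a.e. t > 0.
  The H-valued maps are represented by jointly measurable functions of (t,x).\<close>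
definition strong_solution :: "(('a \<Rightarrow> real) \<Rightarrow> ('a \<Rightarrow> real) \<Rightarrow> bool) \<Rightarrow> 'a measure \<Rightarrow>
    ('a \<Rightarrow> real) \<Rightarrow> (real \<Rightarrow> 'a \<Rightarrow> real) \<Rightarrow> bool" where
  "strong_solution A \<nu> u0 u \<longleftrightarrow>
     (\<forall>t\<ge>0. L2 \<nu> (u t)) \<and>
     (AE x in \<nu>. u 0 x = u0 x) \<and>
     (\<forall>t\<ge>0. ((\<lambda>s. \<integral>x. (u s x - u t x)\<^sup>2 \<partial>\<nu>) \<longlongrightarrow> 0) (at t within {0..})) \<and>
     (\<exists>g :: real \<Rightarrow> 'a \<Rightarrow> real.
        (\<lambda>(t, x). g t x) \<in> borel_measurable (lborel \<Otimes>\<^sub>M \<nu>) \<and>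
        (\<forall>a b. 0 < a \<longrightarrow> a \<le> b \<longrightarrow>
           (\<integral>\<^sup>+t. indicator {a..b} t * (\<integral>\<^sup>+x. ennreal ((g t x)\<^sup>2) \<partial>\<nu>) \<partial>lborel) < \<infinity>) \<and>
        (\<forall>s t. 0 < s \<longrightarrow> s \<le> t \<longrightarrow>
           (AE x in \<nu>. u t x - u s x = (\<integral>\<tau>. indicator {s..t} \<tau> * g \<tau> x \<partial>lborel))) \<and>
        (AE t in lborel. 0 < t \<longrightarrow> A (u t) (\<lambda>x. - g t x)))"

end

theory Submission
  imports Defs
begin


lemma L2_integrable:
  assumes "L2 \<nu> f" "finite_measure \<nu>"
  shows "integrable \<nu> f"
proof -
  interpret finite_measure \<nu> by fact
  have [measurable]: "f \<in> borel_measurable \<nu>" and i: "integrable \<nu> (\<lambda>x. (f x)\<^sup>2)"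
    using assms L2_def by auto
  have I: "integrable \<nu> (\<lambda>x. 1 + (f x)\<^sup>2)" using i by auto
  have N: "\<And>x. norm (f x) \<le> norm (1 + (f x)\<^sup>2)"
  proof -
    fix x show "norm (f x) \<le> norm (1 + (f x)\<^sup>2)"
    proof -
      have "0 \<le> (\<bar>f x\<bar> - 1)\<^sup>2" by simp
      then have "0 \<le> \<bar>f x\<bar>*\<bar>f x\<bar> - 2*\<bar>f x\<bar> + 1" by (simp add: power2_eq_square algebra_simps)
      then show ?thesis by (simp add: power2_eq_square abs_mult_self_eq)
    qed
  qed
  show ?thesis
  proof (rule Bochner_Integration.integrable_bound[OF I])
    show "AE x in \<nu>. norm (f x) \<le> norm (1 + (f x)\<^sup>2)" using N by (intro AE_I2) 
  qed simp
qed

lemma L2_shift: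
  assumes "L2 \<nu> f" "finite_measure \<nu>"
  shows "L2 \<nu> (\<lambda>x. f x + a)"
proof -
  interpret finite_measure \<nu> by fact
  have [measurable]: "f \<in> borel_measurable \<nu>" and i: "integrable \<nu> (\<lambda>x. (f x)\<^sup>2)"
    using assms L2_def by auto
  have fi: "integrable \<nu> f" using L2_integrable assms by blast
  have "integrable \<nu> (\<lambda>x. (f x)\<^sup>2 + (2*a) * f x + a\<^sup>2)" using i fi by auto
  then have "integrable \<nu> (\<lambda>x. (f x + a)\<^sup>2)" by (simp add: power2_eq_square algebra_simps)
  then show ?thesis unfolding L2_def by auto
qed

lemma Delta1_mean_zero:
  assumes "Delta1 m \<nu> u (\<lambda>x. - v1 x)" "finite_measure \<nu>"
  shows "(\<integral>x. v1 x \<partial>\<nu>) = 0"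
proof -
  interpret finite_measure \<nu> by fact
  have S: "subdiff_L2 \<nu> (F1 m \<nu>) u v1" using assms(1) unfolding Delta1_def by simp
  then have Lu: "L2 \<nu> u" and Lv: "L2 \<nu> v1" and fin: "F1 m \<nu> u < \<infinity>"
    and ineq: "\<And>w. L2 \<nu> w \<Longrightarrow> enn2ereal (F1 m \<nu> w) \<ge> enn2ereal (F1 m \<nu> u) + ereal (\<integral>x. v1 x * (w x - u x) \<partial>\<nu>)"
    unfolding subdiff_L2_def by auto
  have F: "F1 m \<nu> (\<lambda>x. u x + a) = F1 m \<nu> u" for a
    unfolding F1_def nl_grad_def by simp
  obtain r where r: "enn2ereal (F1 m \<nu> u) = ereal r"
    using fin by (cases "F1 m \<nu> u") (auto simp: ennreal_less_top)
  have "ereal r \<ge> ereal r + ereal (\<integral>x. v1 x * ((u x + a) - u x) \<partial>\<nu>)" for a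
    using ineq[OF L2_shift[OF Lu assms(2), of a]] F r by simp
  then have "(\<integral>x. v1 x * a \<partial>\<nu>) \<le> 0" for a by simp
  from this[of 1] this[of "-1"] show ?thesis by simp
qed



lemma powr_bound:
  fixes a p :: real assumes "a \<ge> 0" "p > 1"
  shows "a powr (p - 2) * a \<le> 1 + a powr p"
proof (cases "a = 0")
  case True then show ?thesis by simp
next
  case False
  then have "a powr (p - 2) * a = a powr (1 + (p - 2))"
    using assms powr_mult_base[of a "p - 2"] by (simp add: mult.commute)
  also have "\<dots> = a powr (p - 1)" by simp
  finally have e: "a powr (p - 2) * a = a powr (p - 1)" .
  show ?thesis
  proof (cases "a \<le> 1")
    case True
    then have "a powr (p - 1) \<le> 1" using assms by (intro powr_le1) auto
    then show ?thesis using e by (simp add: add_increasing2)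
  next
    case False
    then have "a powr (p - 1) \<le> a powr p" by (intro powr_mono) auto
    then show ?thesis using e by simp
  qed
qed

lemma phi_abs_bound:
  fixes g p :: real assumes "p > 1"
  shows "\<bar>\<bar>g\<bar> powr (p - 2) * g\<bar> \<le> 1 + \<bar>g\<bar> powr p"
proof -
  have "\<bar>\<bar>g\<bar> powr (p - 2) * g\<bar> = \<bar>g\<bar> powr (p - 2) * \<bar>g\<bar>" by (simp add: abs_mult)
  then show ?thesis using powr_bound[of "\<bar>g\<bar>" p] assms by simp
qed

lemma Deltap_mean_zero:
  assumes p: "p > 1" and RW: "reversible_random_walk_space M m \<nu>" and fin: "finite_measure \<nu>"
    and D: "Deltap p m \<nu> u w"
  shows "(\<integral>x. w x \<partial>\<nu>) = 0"
proof -
  interpret finite_measure \<nu> by fact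
  have rws: "random_walk_space M m \<nu>" and rev: "reversible M m \<nu>"
    using RW unfolding reversible_random_walk_space_def by auto
  have sets_eq: "sets \<nu> = sets M" and rw: "random_walk M m"
    using rws unfolding random_walk_space_def by auto
  have sp: "space \<nu> = space M" using sets_eq by (rule sets_eq_imp_space_eq)
  have mx: "\<And>x. x \<in> space M \<Longrightarrow> prob_space (m x)" "\<And>x. x \<in> space M \<Longrightarrow> sets (m x) = sets M"
    and mA: "\<And>A. A \<in> sets M \<Longrightarrow> (\<lambda>x. emeasure (m x) A) \<in> borel_measurable M"
    using rw unfolding random_walk_def by auto
  have K[measurable]: "m \<in> measurable M (subprob_algebra M)"
    by (rule measurable_subprob_algebra) (auto intro: prob_space_imp_subprob_space mx mA simp: mx(2))
  have Lu: "L2 \<nu> u" and Lw: "L2 \<nu> w"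
    and Gfin: "(\<integral>\<^sup>+x. (\<integral>\<^sup>+y. ennreal (\<bar>nl_grad u x y\<bar> powr p) \<partial>m x) \<partial>\<nu>) < \<infinity>"
    and wAE: "AE x in \<nu>. w x = (\<integral>y. \<bar>nl_grad u x y\<bar> powr (p - 2) * nl_grad u x y \<partial>m x)"
    using D unfolding Deltap_def by auto
  have uM[measurable]: "u \<in> borel_measurable M"
    using Lu measurable_cong_sets[OF sets_eq refl] unfolding L2_def by auto
  have wM[measurable]: "w \<in> borel_measurable M"
    using Lw measurable_cong_sets[OF sets_eq refl] unfolding L2_def by auto
  define \<phi> where "\<phi> x y = \<bar>nl_grad u x y\<bar> powr (p - 2) * nl_grad u x y" for x y
  have \<phi>M[measurable]: "(\<lambda>(x, y). \<phi> x y) \<in> borel_measurable (M \<Otimes>\<^sub>M M)"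
    unfolding \<phi>_def nl_grad_def by measurable
  have \<phi>M2[measurable]: "(\<lambda>y. \<phi> x y) \<in> borel_measurable M" for x
    unfolding \<phi>_def nl_grad_def by measurable
  have anti: "\<phi> y x = - \<phi> x y" for x y
    unfolding \<phi>_def nl_grad_def by (simp add: abs_minus_commute algebra_simps)
  define P where "P x = (\<integral>\<^sup>+y. ennreal (\<phi> x y) \<partial>m x)" for x
  define N where "N x = (\<integral>\<^sup>+y. ennreal (- \<phi> x y) \<partial>m x)" for x
  define A where "A x = (\<integral>\<^sup>+y. ennreal \<bar>\<phi> x y\<bar> \<partial>m x)" for x
  define G where "G x = (\<integral>\<^sup>+y. ennreal (\<bar>nl_grad u x y\<bar> powr p) \<partial>m x)" for x
  have PM[measurable]: "P \<in> borel_measurable M" unfolding P_def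
    by (rule nn_integral_measurable_subprob_algebra2[OF _ K]) measurable
  have NM[measurable]: "N \<in> borel_measurable M" unfolding N_def
    by (rule nn_integral_measurable_subprob_algebra2[OF _ K]) measurable
  have AM[measurable]: "A \<in> borel_measurable M" unfolding A_def
    by (rule nn_integral_measurable_subprob_algebra2[OF _ K]) measurable
  have GM[measurable]: "G \<in> borel_measurable M" unfolding G_def
    by (rule nn_integral_measurable_subprob_algebra2[OF _ K]) (unfold nl_grad_def, measurable)
  have PN: "(\<integral>\<^sup>+x. P x \<partial>\<nu>) = (\<integral>\<^sup>+x. N x \<partial>\<nu>)"
  proof -
    have "(\<lambda>(x, y). ennreal (\<phi> x y)) \<in> borel_measurable (M \<Otimes>\<^sub>M M)" by measurable
    then have "(\<integral>\<^sup>+x. (\<integral>\<^sup>+y. (\<lambda>(x, y). ennreal (\<phi> x y)) (x, y) \<partial>m x) \<partial>\<nu>)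
        = (\<integral>\<^sup>+x. (\<integral>\<^sup>+y. (\<lambda>(x, y). ennreal (\<phi> x y)) (y, x) \<partial>m x) \<partial>\<nu>)"
      using rev unfolding reversible_def by blast
    then have "(\<integral>\<^sup>+x. P x \<partial>\<nu>) = (\<integral>\<^sup>+x. (\<integral>\<^sup>+y. ennreal (\<phi> y x) \<partial>m x) \<partial>\<nu>)"
      unfolding P_def by (simp only: prod.case)
    also have "\<dots> = (\<integral>\<^sup>+x. N x \<partial>\<nu>)" unfolding N_def
      by (rule nn_integral_cong, rule nn_integral_cong, rule arg_cong[where f=ennreal], rule anti)
    finally show ?thesis .
  qed
  have AG: "A x \<le> 1 + G x" if "x \<in> space M" for x
  proof -
    interpret px: prob_space "m x" using mx(1)[OF that] .
    have pb: "ennreal \<bar>\<bar>g\<bar> powr (p - 2) * g\<bar> \<le> 1 + ennreal (\<bar>g\<bar> powr p)" for g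
    proof -
      have "ennreal \<bar>\<bar>g\<bar> powr (p - 2) * g\<bar> \<le> ennreal (1 + \<bar>g\<bar> powr p)"
        by (rule ennreal_leI, rule phi_abs_bound[OF p])
      also have "\<dots> = 1 + ennreal (\<bar>g\<bar> powr p)" by (simp add: ennreal_plus)
      finally show ?thesis .
    qed
    have "A x \<le> (\<integral>\<^sup>+y. 1 + ennreal (\<bar>nl_grad u x y\<bar> powr p) \<partial>m x)"
      unfolding A_def \<phi>_def
      by (intro nn_integral_mono pb)
    also have "\<dots> = (\<integral>\<^sup>+y. 1 \<partial>m x) + G x" unfolding G_def
      using mx(2)[OF that] by (intro nn_integral_add) (auto simp: measurable_cong_sets[OF mx(2)[OF that] refl] nl_grad_def)
    also have "(\<integral>\<^sup>+y. 1 \<partial>m x) = 1" by (simp add: px.emeasure_space_1)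
    finally show ?thesis .
  qed
  have Afin: "(\<integral>\<^sup>+x. A x \<partial>\<nu>) < \<infinity>"
  proof -
    have "(\<integral>\<^sup>+x. A x \<partial>\<nu>) \<le> (\<integral>\<^sup>+x. 1 + G x \<partial>\<nu>)"
      using AG sp by (intro nn_integral_mono) auto
    also have "\<dots> = (\<integral>\<^sup>+x. 1 \<partial>\<nu>) + (\<integral>\<^sup>+x. G x \<partial>\<nu>)"
      by (intro nn_integral_add) (auto simp: measurable_cong_sets[OF sets_eq refl])
    also have "\<dots> < \<infinity>" using Gfin unfolding G_def by (simp add: emeasure_real less_top[symmetric])
    finally show ?thesis .
  qed
  have AM'[measurable]: "A \<in> borel_measurable \<nu>" "P \<in> borel_measurable \<nu>" "N \<in> borel_measurable \<nu>"
    using AM PM NM by (auto simp: measurable_cong_sets[OF sets_eq refl])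
  have AEA: "AE x in \<nu>. A x \<noteq> \<infinity>"
    using Afin by (intro nn_integral_PInf_AE) auto
  have PA: "P x \<le> A x" "N x \<le> A x" for x
    unfolding P_def N_def A_def by (auto intro!: nn_integral_mono ennreal_leI)
  have Pfin: "(\<integral>\<^sup>+x. P x \<partial>\<nu>) < \<infinity>"
    using Afin PA by (meson le_less_trans nn_integral_mono)
  have AEw: "AE x in \<nu>. w x = enn2real (P x) - enn2real (N x)"
    using AEA wAE AE_space
  proof eventually_elim
    case (elim x)
    then have x: "x \<in> space M" using sp by simp
    have "integrable (m x) (\<phi> x)"
    proof (rule integrableI_bounded)
      show "\<phi> x \<in> borel_measurable (m x)" by (subst measurable_cong_sets[OF mx(2)[OF x] refl]) (rule \<phi>M2)
      show "(\<integral>\<^sup>+y. ennreal (norm (\<phi> x y)) \<partial>m x) < \<infinity>"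
        using elim unfolding A_def by (simp add: less_top)
    qed
    then have "(\<integral>y. \<phi> x y \<partial>m x) = enn2real (P x) - enn2real (N x)"
      unfolding P_def N_def by (rule real_lebesgue_integral_def)
    then show ?case using elim unfolding \<phi>_def by simp
  qed
  have intP: "integrable \<nu> (\<lambda>x. enn2real (P x))" "integrable \<nu> (\<lambda>x. enn2real (N x))"
  proof -
    show "integrable \<nu> (\<lambda>x. enn2real (P x))"
    proof (rule integrableI_bounded)
      have "(\<integral>\<^sup>+x. ennreal (norm (enn2real (P x))) \<partial>\<nu>) \<le> (\<integral>\<^sup>+x. A x \<partial>\<nu>)"
        using PA by (intro nn_integral_mono) (simp add: ennreal_enn2real_if)
      then show "(\<integral>\<^sup>+x. ennreal (norm (enn2real (P x))) \<partial>\<nu>) < \<infinity>" using Afin by (rule le_less_trans)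
    qed measurable
    show "integrable \<nu> (\<lambda>x. enn2real (N x))"
    proof (rule integrableI_bounded)
      have "(\<integral>\<^sup>+x. ennreal (norm (enn2real (N x))) \<partial>\<nu>) \<le> (\<integral>\<^sup>+x. A x \<partial>\<nu>)"
        using PA by (intro nn_integral_mono) (simp add: ennreal_enn2real_if)
      then show "(\<integral>\<^sup>+x. ennreal (norm (enn2real (N x))) \<partial>\<nu>) < \<infinity>" using Afin by (rule le_less_trans)
    qed measurable
  qed
  have "AE x in \<nu>. P x = ennreal (enn2real (P x))"
    using AEA
  proof eventually_elim
    case (elim x)
    then have "P x \<noteq> \<top>" using PA[of x] by (auto simp: top_unique)
    then show ?case by (simp add: ennreal_enn2real_if)
  qed
  then have eP: "(\<integral>x. enn2real (P x) \<partial>\<nu>) = enn2real (\<integral>\<^sup>+x. P x \<partial>\<nu>)"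
    by (intro enn2real_nn_integral_eq_integral[symmetric]) auto
  have "AE x in \<nu>. N x = ennreal (enn2real (N x))"
    using AEA
  proof eventually_elim
    case (elim x)
    then have "N x \<noteq> \<top>" using PA[of x] by (auto simp: top_unique)
    then show ?case by (simp add: ennreal_enn2real_if)
  qed
  then have eN: "(\<integral>x. enn2real (N x) \<partial>\<nu>) = enn2real (\<integral>\<^sup>+x. N x \<partial>\<nu>)"
    by (intro enn2real_nn_integral_eq_integral[symmetric]) auto
  have "(\<integral>x. w x \<partial>\<nu>) = (\<integral>x. enn2real (P x) - enn2real (N x) \<partial>\<nu>)"
    using AEw by (intro integral_cong_AE) (auto simp: measurable_cong_sets[OF sets_eq refl])
  also have "\<dots> = (\<integral>x. enn2real (P x) \<partial>\<nu>) - (\<integral>x. enn2real (N x) \<partial>\<nu>)"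
    using intP by (rule Bochner_Integration.integral_diff)
  also have "\<dots> = 0" using eP eN PN by simp
  finally show ?thesis .
qed



lemma abs_le_1_sq: "\<bar>y::real\<bar> \<le> 1 + y\<^sup>2"
proof -
  have "0 \<le> (\<bar>y\<bar> - 1)\<^sup>2" by simp
  then have "0 \<le> \<bar>y\<bar>*\<bar>y\<bar> - 2*\<bar>y\<bar> + 1" by (simp add: power2_eq_square algebra_simps)
  then show ?thesis by (simp add: power2_eq_square abs_mult_self_eq)
qed

lemma time_step:
  fixes g :: "real \<Rightarrow> 'a \<Rightarrow> real" and u :: "real \<Rightarrow> 'a \<Rightarrow> real"
  assumes fin: "finite_measure \<nu>"
    and gM[measurable]: "(\<lambda>(t, x). g t x) \<in> borel_measurable (lborel \<Otimes>\<^sub>M \<nu>)"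
    and gsq: "(\<integral>\<^sup>+\<tau>. indicator {s..t} \<tau> * (\<integral>\<^sup>+x. ennreal ((g \<tau> x)\<^sup>2) \<partial>\<nu>) \<partial>lborel) < \<infinity>"
    and g0: "AE \<tau> in lborel. 0 < \<tau> \<longrightarrow> (\<integral>x. g \<tau> x \<partial>\<nu>) = 0"
    and ftc: "AE x in \<nu>. u t x - u s x = (\<integral>\<tau>. indicator {s..t} \<tau> * g \<tau> x \<partial>lborel)"
    and It: "integrable \<nu> (u t)" and Is: "integrable \<nu> (u s)"
    and st: "0 < s" "s \<le> t"
  shows "(\<integral>x. u t x \<partial>\<nu>) = (\<integral>x. u s x \<partial>\<nu>)"
proof -
  interpret finite_measure \<nu> by fact
  interpret P: pair_sigma_finite lborel \<nu>
    by (simp add: pair_sigma_finite_def lborel.sigma_finite_measure_axioms sigma_finite_measure_axioms)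
  define f where "f \<tau> x = indicator {s..t} \<tau> * g \<tau> x" for \<tau> x
  have fM[measurable]: "(\<lambda>(\<tau>, x). f \<tau> x) \<in> borel_measurable (lborel \<Otimes>\<^sub>M \<nu>)"
    unfolding f_def by measurable
  have gM2[measurable]: "(\<lambda>x. g \<tau> x) \<in> borel_measurable \<nu>" for \<tau>
    using measurable_Pair2[OF gM, of \<tau>] by simp
  define IG where "IG \<tau> = (\<integral>\<^sup>+x. ennreal ((g \<tau> x)\<^sup>2) \<partial>\<nu>)" for \<tau>
  have IGM[measurable]: "IG \<in> borel_measurable lborel" unfolding IG_def by measurable
  have "integrable (lborel \<Otimes>\<^sub>M \<nu>) (\<lambda>(\<tau>, x). f \<tau> x)"
  proof (rule integrableI_bounded)
    have "(\<integral>\<^sup>+z. ennreal (norm (case z of (\<tau>, x) \<Rightarrow> f \<tau> x)) \<partial>(lborel \<Otimes>\<^sub>M \<nu>))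
        = (\<integral>\<^sup>+\<tau>. (\<integral>\<^sup>+x. ennreal (norm (f \<tau> x)) \<partial>\<nu>) \<partial>lborel)"
    proof -
      have m: "(\<lambda>z. ennreal (norm (case z of (\<tau>, x) \<Rightarrow> f \<tau> x))) \<in> borel_measurable (lborel \<Otimes>\<^sub>M \<nu>)"
        by measurable
      show ?thesis using nn_integral_fst[OF m] by simp
    qed
    also have "\<dots> \<le> (\<integral>\<^sup>+\<tau>. (\<integral>\<^sup>+x. indicator {s..t} \<tau> * (1 + ennreal ((g \<tau> x)\<^sup>2)) \<partial>\<nu>) \<partial>lborel)"
    proof (intro nn_integral_mono)
      fix \<tau> x
      have "ennreal (norm (f \<tau> x)) = indicator {s..t} \<tau> * ennreal \<bar>g \<tau> x\<bar>"
        unfolding f_def by (auto simp: indicator_def abs_mult)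
      also have "\<dots> \<le> indicator {s..t} \<tau> * (1 + ennreal ((g \<tau> x)\<^sup>2))"
      proof (intro mult_left_mono)
        have "ennreal \<bar>g \<tau> x\<bar> \<le> ennreal (1 + (g \<tau> x)\<^sup>2)" by (rule ennreal_leI, rule abs_le_1_sq)
        then show "ennreal \<bar>g \<tau> x\<bar> \<le> 1 + ennreal ((g \<tau> x)\<^sup>2)" by (simp add: ennreal_plus)
      qed simp
      finally show "ennreal (norm (f \<tau> x)) \<le> indicator {s..t} \<tau> * (1 + ennreal ((g \<tau> x)\<^sup>2))" .
    qed
    also have "\<dots> = (\<integral>\<^sup>+\<tau>. indicator {s..t} \<tau> * emeasure \<nu> (space \<nu>) + indicator {s..t} \<tau> * IG \<tau> \<partial>lborel)"
    proof (intro nn_integral_cong)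
      fix \<tau>
      have "(\<integral>\<^sup>+x. indicator {s..t} \<tau> * (1 + ennreal ((g \<tau> x)\<^sup>2)) \<partial>\<nu>)
          = indicator {s..t} \<tau> * (\<integral>\<^sup>+x. 1 + ennreal ((g \<tau> x)\<^sup>2) \<partial>\<nu>)"
        by (rule nn_integral_cmult) measurable
      also have "(\<integral>\<^sup>+x. 1 + ennreal ((g \<tau> x)\<^sup>2) \<partial>\<nu>) = emeasure \<nu> (space \<nu>) + IG \<tau>"
        unfolding IG_def by (subst nn_integral_add) auto
      finally show "(\<integral>\<^sup>+x. indicator {s..t} \<tau> * (1 + ennreal ((g \<tau> x)\<^sup>2)) \<partial>\<nu>)
          = indicator {s..t} \<tau> * emeasure \<nu> (space \<nu>) + indicator {s..t} \<tau> * IG \<tau>"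
        by (simp add: distrib_left)
    qed
    also have "\<dots> = (\<integral>\<^sup>+\<tau>. indicator {s..t} \<tau> * emeasure \<nu> (space \<nu>) \<partial>lborel) + (\<integral>\<^sup>+\<tau>. indicator {s..t} \<tau> * IG \<tau> \<partial>lborel)"
      by (rule nn_integral_add) auto
    also have "\<dots> < \<infinity>"
      using gsq unfolding IG_def
      by (simp add: mult.commute[of "indicator _ _"] nn_integral_cmult_indicator ennreal_mult_less_top
          emeasure_real less_top[symmetric] emeasure_finite ennreal_mult_eq_top_iff st)
    finally show "(\<integral>\<^sup>+z. ennreal (norm (case z of (\<tau>, x) \<Rightarrow> f \<tau> x)) \<partial>(lborel \<Otimes>\<^sub>M \<nu>)) < \<infinity>" .
  qed measurable
  note int = this
  have FUB: "(\<integral>x. (\<integral>\<tau>. f \<tau> x \<partial>lborel) \<partial>\<nu>) = (\<integral>\<tau>. (\<integral>x. f \<tau> x \<partial>\<nu>) \<partial>lborel)"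
    by (rule P.Fubini_integral[OF int])
  have "(\<integral>\<tau>. (\<integral>x. f \<tau> x \<partial>\<nu>) \<partial>lborel) = 0"
  proof (rule integral_eq_zero_AE)
    show "AE \<tau> in lborel. (\<integral>x. f \<tau> x \<partial>\<nu>) = 0"
      using g0 by eventually_elim (use st in \<open>auto simp: f_def indicator_def\<close>)
  qed
  moreover have "(\<integral>x. u t x - u s x \<partial>\<nu>) = (\<integral>x. (\<integral>\<tau>. f \<tau> x \<partial>lborel) \<partial>\<nu>)"
  proof (rule integral_cong_AE)
    show "(\<lambda>x. u t x - u s x) \<in> borel_measurable \<nu>" using It Is by auto
    show "(\<lambda>x. \<integral>\<tau>. f \<tau> x \<partial>lborel) \<in> borel_measurable \<nu>"
      using P.integrable_snd[OF int] by (rule borel_measurable_integrable)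
    show "AE x in \<nu>. u t x - u s x = (\<integral>\<tau>. f \<tau> x \<partial>lborel)" using ftc unfolding f_def .
  qed
  moreover have "(\<integral>x. u t x - u s x \<partial>\<nu>) = (\<integral>x. u t x \<partial>\<nu>) - (\<integral>x. u s x \<partial>\<nu>)"
    using It Is by (rule Bochner_Integration.integral_diff)
  ultimately show ?thesis using FUB by simp
qed



lemma L2_diff_sq:
  assumes "L2 \<nu> f" "L2 \<nu> h"
  shows "integrable \<nu> (\<lambda>x. (f x - h x)\<^sup>2)"
proof -
  have [measurable]: "f \<in> borel_measurable \<nu>" "h \<in> borel_measurable \<nu>"
    and i: "integrable \<nu> (\<lambda>x. (f x)\<^sup>2)" "integrable \<nu> (\<lambda>x. (h x)\<^sup>2)"
    using assms L2_def by auto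
  have I: "integrable \<nu> (\<lambda>x. 2 * (f x)\<^sup>2 + 2 * (h x)\<^sup>2)" using i by auto
  have N: "norm ((f x - h x)\<^sup>2) \<le> norm (2 * (f x)\<^sup>2 + 2 * (h x)\<^sup>2)" for x
  proof -
    have "0 \<le> (f x + h x)\<^sup>2" by simp
    then have "(f x - h x)\<^sup>2 \<le> 2 * (f x)\<^sup>2 + 2 * (h x)\<^sup>2" by (simp add: power2_eq_square algebra_simps)
    then show ?thesis by simp
  qed
  show ?thesis
  proof (rule Bochner_Integration.integrable_bound[OF I])
    show "AE x in \<nu>. norm ((f x - h x)\<^sup>2) \<le> norm (2 * (f x)\<^sup>2 + 2 * (h x)\<^sup>2)" using N by (intro AE_I2)
  qed simp
qed

lemma int_sq_bound:
  assumes fin: "finite_measure \<nu>" and d: "integrable \<nu> d" and d2: "integrable \<nu> (\<lambda>x. (d x)\<^sup>2)"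
  shows "(\<integral>x. d x \<partial>\<nu>)\<^sup>2 \<le> measure \<nu> (space \<nu>) * (\<integral>x. (d x)\<^sup>2 \<partial>\<nu>)"
proof -
  interpret finite_measure \<nu> by fact
  define V where "V = measure \<nu> (space \<nu>)"
  define I where "I = (\<integral>x. d x \<partial>\<nu>)"
  define J where "J = (\<integral>x. (d x)\<^sup>2 \<partial>\<nu>)"
  show ?thesis
  proof (cases "V = 0")
    case True
    then have "emeasure \<nu> (space \<nu>) = 0" unfolding V_def by (simp add: emeasure_eq_measure)
    then have "AE x in \<nu>. d x = 0" by (intro AE_I'[of "space \<nu>"]) auto
    then have "I = 0" unfolding I_def by (rule integral_eq_zero_AE)
    then show ?thesis using True by (simp add: I_def V_def)
  next
    case False
    then have Vp: "V > 0" unfolding V_def using measure_nonneg[of \<nu> "space \<nu>"] by linarith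
    define a where "a = I / V"
    have "0 \<le> (\<integral>x. (d x - a)\<^sup>2 \<partial>\<nu>)" by simp
    also have "(\<integral>x. (d x - a)\<^sup>2 \<partial>\<nu>) = (\<integral>x. (d x)\<^sup>2 - (2 * a) * d x + a\<^sup>2 \<partial>\<nu>)"
      by (simp add: power2_eq_square algebra_simps)
    also have "\<dots> = J - (2 * a) * I + V * a\<^sup>2"
      using d d2 by (simp add: J_def I_def V_def)
    finally have "0 \<le> J - (2 * a) * I + V * a\<^sup>2" .
    then have "0 \<le> J - I\<^sup>2 / V" using Vp unfolding a_def by (simp add: power2_eq_square field_simps)
    then have "I\<^sup>2 / V \<le> J" by simp
    then show ?thesis using Vp by (simp add: I_def J_def V_def[symmetric] pos_divide_le_eq mult.commute)
  qed
qed



theorem lemma3p3: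
  fixes M :: "'a measure"
    and m1 m2 :: "'a \<Rightarrow> 'a measure"
    and \<nu>1 \<nu>2 :: "'a measure"
    and \<mu> :: "'a \<Rightarrow> real"
    and p c :: real
    and u0 :: "'a \<Rightarrow> real"
    and u :: "real \<Rightarrow> 'a \<Rightarrow> real"
  assumes "p > 1"
    and "reversible_random_walk_space M m1 \<nu>1"
    and "reversible_random_walk_space M m2 \<nu>2"
    and "\<mu> \<in> borel_measurable M"
    and "\<nu>2 = density \<nu>1 (\<lambda>x. ennreal (\<mu> x))"
    and "\<exists>K. AE x in \<nu>1. \<bar>\<mu> x\<bar> \<le> K"
    and "c > 0" and "AE x in \<nu>1. \<mu> x \<ge> c"
    and "emeasure \<nu>1 (space \<nu>1) < \<infinity>"
    and "L2 \<nu>1 u0"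
    and "strong_solution (opA p m1 \<nu>1 m2 \<nu>2 \<mu>) \<nu>1 u0 u"
  shows "\<forall>t\<ge>0. (\<integral>x. u t x \<partial>\<nu>1) = (\<integral>x. u0 x \<partial>\<nu>1)"
proof -
  have fin1: "finite_measure \<nu>1" using assms(9) by (intro finite_measureI) simp
  interpret F1: finite_measure \<nu>1 by (rule fin1)
  have sets1: "sets \<nu>1 = sets M"
    using assms(2) unfolding reversible_random_walk_space_def random_walk_space_def by auto
  have \<mu>M[measurable]: "\<mu> \<in> borel_measurable \<nu>1"
    by (subst measurable_cong_sets[OF sets1 refl]) (rule assms(4))
  have \<mu>nn: "AE x in \<nu>1. 0 \<le> \<mu> x" using assms(8)
  proof eventually_elim
    case (elim x) then show ?case using assms(7) by linarith
  qed
  obtain K where K: "AE x in \<nu>1. \<bar>\<mu> x\<bar> \<le> K" using assms(6) by blast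
  have fin2: "finite_measure \<nu>2"
  proof (rule finite_measureI)
    have "emeasure \<nu>2 (space \<nu>2) = (\<integral>\<^sup>+x. ennreal (\<mu> x) * indicator (space \<nu>1) x \<partial>\<nu>1)"
      unfolding assms(5) by (subst emeasure_density) auto
    also have "\<dots> \<le> (\<integral>\<^sup>+x. ennreal K \<partial>\<nu>1)"
    proof (intro nn_integral_mono_AE)
      show "AE x in \<nu>1. ennreal (\<mu> x) * indicator (space \<nu>1) x \<le> ennreal K"
        using K
      proof eventually_elim
        case (elim x) then show ?case by (auto intro!: ennreal_leI simp: indicator_def)
      qed
    qed
    also have "\<dots> < \<infinity>" using assms(9) by (simp add: ennreal_mult_less_top)
    finally show "emeasure \<nu>2 (space \<nu>2) \<noteq> \<infinity>" by simp
  qed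
  have sets21: "sets \<nu>2 = sets \<nu>1" unfolding assms(5) by simp
  have Z: "(\<integral>x. h x \<partial>\<nu>1) = 0" if A: "opA p m1 \<nu>1 m2 \<nu>2 \<mu> f h" for f h
  proof -
    obtain v1 w where Lh: "L2 \<nu>1 h" and D1: "Delta1 m1 \<nu>1 f (\<lambda>x. - v1 x)"
      and Dp: "Deltap p m2 \<nu>2 f w" and hAE: "AE x in \<nu>1. h x = v1 x - \<mu> x * w x"
      using A unfolding opA_def by blast
    have v10: "(\<integral>x. v1 x \<partial>\<nu>1) = 0" using Delta1_mean_zero[OF D1 fin1] .
    have Lv1: "L2 \<nu>1 v1" using D1 unfolding Delta1_def subdiff_L2_def by simp
    have w0: "(\<integral>x. w x \<partial>\<nu>2) = 0" using Deltap_mean_zero[OF assms(1) assms(3) fin2 Dp] .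
    have Lw: "L2 \<nu>2 w" using Dp unfolding Deltap_def by simp
    have wM[measurable]: "w \<in> borel_measurable \<nu>1"
      using Lw unfolding L2_def by (subst measurable_cong_sets[OF sets21[symmetric] refl]) simp
    have iw2: "integrable \<nu>2 w" using L2_integrable[OF Lw fin2] .
    have iv1: "integrable \<nu>1 v1" using L2_integrable[OF Lv1 fin1] .
    have iw: "integrable \<nu>1 (\<lambda>x. \<mu> x * w x)"
      using iw2 unfolding assms(5) by (subst (asm) integrable_density) (auto simp: \<mu>nn)
    have "(\<integral>x. \<mu> x * w x \<partial>\<nu>1) = (\<integral>x. w x \<partial>\<nu>2)"
      unfolding assms(5) by (subst integral_density) (auto simp: \<mu>nn)
    then have mw0: "(\<integral>x. \<mu> x * w x \<partial>\<nu>1) = 0" using w0 by simp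
    have "(\<integral>x. h x \<partial>\<nu>1) = (\<integral>x. v1 x - \<mu> x * w x \<partial>\<nu>1)"
      using hAE Lh iv1 iw by (intro integral_cong_AE) (auto simp: L2_def)
    also have "\<dots> = 0" using iv1 iw v10 mw0 by simp
    finally show ?thesis .
  qed
  have Lut: "\<And>t. t \<ge> 0 \<Longrightarrow> L2 \<nu>1 (u t)" and u0AE: "AE x in \<nu>1. u 0 x = u0 x"
    and cont: "\<And>t. t \<ge> 0 \<Longrightarrow> ((\<lambda>s. \<integral>x. (u s x - u t x)\<^sup>2 \<partial>\<nu>1) \<longlongrightarrow> 0) (at t within {0..})"
    using assms(11) unfolding strong_solution_def by auto
  obtain g :: "real \<Rightarrow> 'a \<Rightarrow> real" where
    gM: "(\<lambda>(t, x). g t x) \<in> borel_measurable (lborel \<Otimes>\<^sub>M \<nu>1)"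
    and gsq: "\<And>a b. 0 < a \<Longrightarrow> a \<le> b \<Longrightarrow>
           (\<integral>\<^sup>+t. indicator {a..b} t * (\<integral>\<^sup>+x. ennreal ((g t x)\<^sup>2) \<partial>\<nu>1) \<partial>lborel) < \<infinity>"
    and ftc: "\<And>s t. 0 < s \<Longrightarrow> s \<le> t \<Longrightarrow>
           (AE x in \<nu>1. u t x - u s x = (\<integral>\<tau>. indicator {s..t} \<tau> * g \<tau> x \<partial>lborel))"
    and gA: "AE t in lborel. 0 < t \<longrightarrow> opA p m1 \<nu>1 m2 \<nu>2 \<mu> (u t) (\<lambda>x. - g t x)"
    using assms(11) unfolding strong_solution_def by blast
  have g0: "AE \<tau> in lborel. 0 < \<tau> \<longrightarrow> (\<integral>x. g \<tau> x \<partial>\<nu>1) = 0"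
    using gA
  proof eventually_elim
    case (elim \<tau>)
    show ?case
    proof
      assume "0 < \<tau>"
      then have "(\<integral>x. - g \<tau> x \<partial>\<nu>1) = 0" using elim Z by blast
      then show "(\<integral>x. g \<tau> x \<partial>\<nu>1) = 0" by simp
    qed
  qed
  have step: "(\<integral>x. u t x \<partial>\<nu>1) = (\<integral>x. u s x \<partial>\<nu>1)" if st: "0 < s" "s \<le> t" for s t
    by (rule time_step[OF fin1 gM gsq[OF st] g0 ftc[OF st]])
       (use st in \<open>auto intro!: L2_integrable[OF Lut fin1]\<close>)
  have i0: "(\<integral>x. u 0 x \<partial>\<nu>1) = (\<integral>x. u0 x \<partial>\<nu>1)"
    using u0AE Lut[of 0] assms(10) by (intro integral_cong_AE) (auto simp: L2_def)
  show ?thesis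
  proof (intro allI impI)
    fix t :: real assume t0: "t \<ge> 0"
    show "(\<integral>x. u t x \<partial>\<nu>1) = (\<integral>x. u0 x \<partial>\<nu>1)"
    proof (cases "t = 0")
      case True then show ?thesis using i0 by simp
    next
      case False
      then have tp: "t > 0" using t0 by simp
      define C where "C = (\<integral>x. u t x \<partial>\<nu>1) - (\<integral>x. u 0 x \<partial>\<nu>1)"
      define V where "V = measure \<nu>1 (space \<nu>1)"
      have bnd: "C\<^sup>2 \<le> V * (\<integral>x. (u s x - u 0 x)\<^sup>2 \<partial>\<nu>1)" if s: "s \<in> {0<..<t}" for s
      proof -
        have L0: "L2 \<nu>1 (u 0)" and Ls: "L2 \<nu>1 (u s)" using Lut s by auto
        have "C = (\<integral>x. u s x \<partial>\<nu>1) - (\<integral>x. u 0 x \<partial>\<nu>1)" using step[of s t] s unfolding C_def by simp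
        also have "\<dots> = (\<integral>x. u s x - u 0 x \<partial>\<nu>1)"
          using L2_integrable[OF Ls fin1] L2_integrable[OF L0 fin1] by simp
        finally have "C = (\<integral>x. u s x - u 0 x \<partial>\<nu>1)" .
        then show ?thesis unfolding V_def
          using int_sq_bound[OF fin1, of "\<lambda>x. u s x - u 0 x"] L2_diff_sq[OF Ls L0]
            L2_integrable[OF Ls fin1] L2_integrable[OF L0 fin1] by simp
      qed
      have lim: "((\<lambda>s. V * (\<integral>x. (u s x - u 0 x)\<^sup>2 \<partial>\<nu>1)) \<longlongrightarrow> V * 0) (at_right 0)"
        using cont[of 0] by (intro tendsto_mult tendsto_const) (simp add: at_within_Ici_at_right)
      have "C\<^sup>2 \<le> V * 0"
      proof (rule tendsto_le[OF _ lim tendsto_const])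
        show "\<not> trivial_limit (at_right (0::real))" by simp
        show "eventually (\<lambda>s. C\<^sup>2 \<le> V * (\<integral>x. (u s x - u 0 x)\<^sup>2 \<partial>\<nu>1)) (at_right 0)"
          using eventually_at_right_real[OF tp] by eventually_elim (rule bnd)
      qed
      then have "C = 0" by simp
      then show ?thesis using i0 unfolding C_def by simp
    qed
  qed
qed


end
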